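(* Let $\mathcal{E}$ be an information exchange that does not transmit information about actions and records decision information, and let $\mathcal{F}$ be a failure model that acts independently on message and action memory and whose state failures do not perturb the action memory. Let $P$ be a decision protocol implementing the knowledge-based program $\mathbf{P}(\Phi)$, with $\Phi_{i,v}=B^{\mathcal{N}}_i\,CB_{\mathcal{N}}\,\exists v$, with respect to $\mathcal{E}$ and $\mathcal{F}$. Then $P$ is an optimum SBA protocol with respect to $\mathcal{E}$ and $\mathcal{F}$.
   Context: Agents $\mathrm{Agt}=\{1,\dots,n\}$; $V$ a totally ordered set of decision values; actions $A_i=\{\mathtt{noop}\}\cup\{\mathtt{decide}_i(v):v\in V\}$. An information exchange $\mathcal{E}$ gives each agent $i$ a tuple $(L_i,I_i,M_i,\mu_i,\delta_i)$: local states $L_i$, initial states $I_i$, messages $M_i\ni\bot$, $\mu_i:L_i\times A_i\to(\mathrm{Agt}\to M_i)$, $\delta_i:L_i\times A_i\times\prod_jM_j\to L_i$; information exchanges are synchronous: local states encode the initial preference $\mathit{init}_i\in V$ and a clock $\mathit{time}_i$, $\delta_i$ preserves $\mathit{init}_i$ and increments $\mathit{time}_i$, and state failures never change $\mathit{time}_i$. $\mathcal{E}$ does not transmit information about actions if for each $i$ there are sets $S_i,D_i$ with $L_i=S_i\times D_i$ and functions $\mu'_i$ on $S_i$, $\delta^1_i:S_i\times\prod_jM_j\to S_i$, $\delta^2_i:D_i\times A_i\to D_i$ with $\mu_i((s,d),a)=\mu'_i(s)$ and $\delta_i((s,d),a,m)=(\delta^1_i(s,m),\delta^2_i(d,a))$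 ($s$: message memory, $d$: action memory). It records decision information if each $D_i$ is a disjoint union $D^1_i\cup D^2_i$ with $I_i\subseteq S_i\times D^1_i$, $\delta^2_i(d,\mathtt{noop})\in D^1_i$ and $\delta^2_i(d,\mathtt{decide}_i(v))\in D^2_i$ for $d\in D^1_i$, and $\delta^2_i(d,a)\in D^2_i$ for $d\in D^2_i$. A decision protocol is $P=(P_i:L_i\to A_i)_i$. A failure model $\mathcal{F}=(L^*_e,I_e,\delta_e,\mathit{Adv})$ has environment states, nonempty initial ones, update $\delta_e$, and adversaries $(\Delta^t,\Delta^r,\Delta^s)$, $\Delta^t,\Delta^r:\mathbb{N}\times\mathrm{Agt}\times\mathrm{Agt}\times\bigcup_iM_i\to\bigcup_iM_i$, $\Delta^s_i:\mathbb{N}\times L_i\to L_i$. It acts independently on message and action memory if for every adversary and agent $i$ there are $\Delta^s_1:\mathbb{N}\times S_i\to S_i$, $\Delta^s_2:\mathbb{N}\times D_i\to D_i$ with $\Delta^s_i(k,(s,d))=(\Delta^s_1(k,s),\Delta^s_2(k,d))$; its state failures do not perturb the action memory if moreover always $\Delta^s_2(k,d)=d$. Runs $r$ of $\mathcal{I}_{P,\mathcal{E},\mathcal{F}}$: $r(0)=((s_e,\alpha),s_1,\dots,s_n)$ with $s_e\in I_e,\alpha\in\mathit{Adv},s_i\in I_i$; from $r(k)=((s_e,\alpha),s_1,\dots,s_n)$, $r(k+1)=((\delta_e(s_e,(a_1,\dots,a_n)),\alpha),s'_1,\dots,s'_n)$ with $a_i=P_i(s_i)$ (action of $i$ at time $k$),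 $m_{i,j}=\mu_i(s_i,a_i)(j)$, $m'_{i,j}=\Delta^r(k,i,j,\Delta^t(k,i,j,m_{i,j}))$, $s^*_j=\delta_j(s_j,a_j,(m'_{1,j},\dots,m'_{n,j}))$, $s'_j=\Delta^s_j(k,s^*_j)$. Runs of different systems correspond if they have the same initial global state. An agent has a fault in a round if its sent messages are altered by $\Delta^t$, its received messages altered by $\Delta^r$, or its updated state altered by $\Delta^s$; $\mathcal{N}(r,m)$ = agents with no fault in any round of $r$. $(r,m)\sim_i(r',m')$ iff $r_i(m)=r'_i(m')$; $K_i\phi$ holds iff $\phi$ holds at all $\sim_i$-related points; $B^{\mathcal{N}}_i\phi:=K_i(i\in\mathcal{N}\Rightarrow\phi)$; $E^B_{\mathcal{N}}\phi:=\bigwedge_{i\in\mathcal{N}}B^{\mathcal{N}}_i\phi$; $CB_{\mathcal{N}}\phi:=\bigwedge_{k\ge1}(E^B_{\mathcal{N}})^k\phi$; $\exists v$ holds at $(r,m)$ iff some agent's initial preference in $r$ is $v$. Knowledge-based program $\mathbf{P}(\Phi)$: agent $i$ does $\mathtt{noop}$ until some $v$ satisfies $\Phi_{i,v}$, then performs $\mathtt{decide}_i(v)$ for the least such $v$, then $\mathtt{noop}$ forever; $P$ implements it w.r.t. $\mathcal{E},\mathcal{F}$ if at every point $(r,m)$ of $\mathcal{I}_{P,\mathcal{E},\mathcal{F}}$ and every agent $i$, $P_i(r_i(m))$ is the prescribed action with $\Phi_{i,v}$ evaluated in $\mathcal{I}_{P,\mathcal{E},\mathcal{F}}$. $P$ is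 an SBA protocol w.r.t. $\mathcal{E},\mathcal{F}$ if in every run: each agent performs a $\mathtt{decide}$ action at most once; if $i\in\mathcal{N}(r,m)$ performs $\mathtt{decide}_i(v)$ at time $m$ then every $j\in\mathcal{N}(r,m)$ performs $\mathtt{decide}_j(v)$ at time $m$; and then some agent has initial preference $v$. $P_1\le_{\mathcal{E},\mathcal{F}}P_2$ iff for every run $r_1$ of $\mathcal{I}_{P_1,\mathcal{E},\mathcal{F}}$ and agent $i$, if $i$ decides at time $m$ in $r_1$ then in the corresponding run of $\mathcal{I}_{P_2,\mathcal{E},\mathcal{F}}$ agent $i$ does not decide at any time earlier than $m$. An SBA protocol $P$ is an optimum w.r.t. $\mathcal{E},\mathcal{F}$ if $P\le_{\mathcal{E},\mathcal{F}}P'$ for every SBA protocol $P'$ w.r.t. $\mathcal{E},\mathcal{F}$. *)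

theory Defs
  imports Main
begin

text \<open>Actions of agent i: noop, or decide_i(v). The agent index of decide_i(v) is
  implicit (it is the agent performing the action).\<close>
datatype 'v act = Noop | Decide 'v

text \<open>Agents are the elements of a finite type 'a; values form a linearly ordered type 'v;
  local states have type 'l, messages type 'msg. Per-agent carriers are sets.\<close>
record ('a, 'v, 'l, 'msg) info_exchange =
  lstates :: "'a \<Rightarrow> 'l set"
  istates :: "'a \<Rightarrow> 'l set"
  msgs    :: "'a \<Rightarrow> 'msg set"
  bot     :: "'msg"
  mu      :: "'a \<Rightarrow> 'l \<Rightarrow> 'v act \<Rightarrow> 'a \<Rightarrow> 'msg"
  delta   :: "'a \<Rightarrow> 'l \<Rightarrow> 'v act \<Rightarrow> ('a \<Rightarrow> 'msg) \<Rightarrow> 'l"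
  init    :: "'a \<Rightarrow> 'l \<Rightarrow> 'v"
  time    :: "'a \<Rightarrow> 'l \<Rightarrow> nat"

definition allmsgs :: "('a, 'v, 'l, 'msg, 'z) info_exchange_scheme \<Rightarrow> 'msg set" where
  "allmsgs E = (\<Union>i. msgs E i)"

definition info_exchange :: "('a, 'v, 'l, 'msg, 'z) info_exchange_scheme \<Rightarrow> bool" where
  "info_exchange E \<longleftrightarrow>
     (\<forall>i. istates E i \<subseteq> lstates E i) \<and>
     (\<forall>i. bot E \<in> msgs E i) \<and>
     (\<forall>i s a j. s \<in> lstates E i \<longrightarrow> mu E i s a j \<in> msgs E i) \<and>
     (\<forall>i s a m. s \<in> lstates E i \<longrightarrow> (\<forall>j. m j \<in> allmsgs E) \<longrightarrow>
        delta E i s a m \<in> lstates E i \<and>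
        init E i (delta E i s a m) = init E i s \<and>
        time E i (delta E i s a m) = Suc (time E i s)) \<and>
     (\<forall>i s. s \<in> istates E i \<longrightarrow> time E i s = 0)"

record ('a, 'l, 'msg) adversary =
  dt :: "nat \<Rightarrow> 'a \<Rightarrow> 'a \<Rightarrow> 'msg \<Rightarrow> 'msg"
  dr :: "nat \<Rightarrow> 'a \<Rightarrow> 'a \<Rightarrow> 'msg \<Rightarrow> 'msg"
  ds :: "'a \<Rightarrow> nat \<Rightarrow> 'l \<Rightarrow> 'l"

record ('a, 'v, 'l, 'msg, 'e) failure_model =
  env_states :: "'e set"
  env_init   :: "'e set"
  env_delta  :: "'e \<Rightarrow> ('a \<Rightarrow> 'v act) \<Rightarrow> 'e"
  advs       :: "('a, 'l, 'msg) adversary set"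

definition failure_model ::
  "('a, 'v, 'l, 'msg, 'z) info_exchange_scheme \<Rightarrow> ('a, 'v, 'l, 'msg, 'e, 'y) failure_model_scheme \<Rightarrow> bool" where
  "failure_model E F \<longleftrightarrow>
     env_init F \<noteq> {} \<and> env_init F \<subseteq> env_states F \<and>
     (\<forall>se acts. se \<in> env_states F \<longrightarrow> env_delta F se acts \<in> env_states F) \<and>
     (\<forall>\<alpha>\<in>advs F.
        (\<forall>k i j m. m \<in> allmsgs E \<longrightarrow> dt \<alpha> k i j m \<in> allmsgs E) \<and>
        (\<forall>k i j m. m \<in> allmsgs E \<longrightarrow> dr \<alpha> k i j m \<in> allmsgs E) \<and>
        (\<forall>i k s. s \<in> lstates E i \<longrightarrow>
            ds \<alpha> i k s \<in> lstates E i \<and> time E i (ds \<alpha> i k s) = time E i s))"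

definition no_action_info ::
  "('a, 'v, 's \<times> 'd, 'msg, 'z) info_exchange_scheme \<Rightarrow> ('a \<Rightarrow> 's set) \<Rightarrow> ('a \<Rightarrow> 'd set)
   \<Rightarrow> ('a \<Rightarrow> 's \<Rightarrow> 'a \<Rightarrow> 'msg) \<Rightarrow> ('a \<Rightarrow> 's \<Rightarrow> ('a \<Rightarrow> 'msg) \<Rightarrow> 's) \<Rightarrow> ('a \<Rightarrow> 'd \<Rightarrow> 'v act \<Rightarrow> 'd) \<Rightarrow> bool" where
  "no_action_info E S D mu' delta1 delta2 \<longleftrightarrow>
     (\<forall>i. lstates E i = S i \<times> D i \<and>
        (\<forall>s\<in>S i. \<forall>m. (\<forall>j. m j \<in> allmsgs E) \<longrightarrow> delta1 i s m \<in> S i) \<and>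
        (\<forall>d\<in>D i. \<forall>a. delta2 i d a \<in> D i) \<and>
        (\<forall>s\<in>S i. \<forall>d\<in>D i. \<forall>a. mu E i (s, d) a = mu' i s) \<and>
        (\<forall>s\<in>S i. \<forall>d\<in>D i. \<forall>a m. (\<forall>j. m j \<in> allmsgs E) \<longrightarrow>
            delta E i (s, d) a m = (delta1 i s m, delta2 i d a)))"

definition records_decision_info ::
  "('a, 'v, 's \<times> 'd, 'msg, 'z) info_exchange_scheme \<Rightarrow> ('a \<Rightarrow> 's set) \<Rightarrow> ('a \<Rightarrow> 'd set)
   \<Rightarrow> ('a \<Rightarrow> 'd \<Rightarrow> 'v act \<Rightarrow> 'd) \<Rightarrow> ('a \<Rightarrow> 'd set) \<Rightarrow> ('a \<Rightarrow> 'd set) \<Rightarrow> bool" where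
  "records_decision_info E S D delta2 D1 D2 \<longleftrightarrow>
     (\<forall>i. D i = D1 i \<union> D2 i \<and> D1 i \<inter> D2 i = {} \<and>
        istates E i \<subseteq> S i \<times> D1 i \<and>
        (\<forall>d\<in>D1 i. delta2 i d Noop \<in> D1 i \<and> (\<forall>v. delta2 i d (Decide v) \<in> D2 i)) \<and>
        (\<forall>d\<in>D2 i. \<forall>a. delta2 i d a \<in> D2 i))"

definition acts_independently ::
  "('a \<Rightarrow> 's set) \<Rightarrow> ('a \<Rightarrow> 'd set) \<Rightarrow> ('a, 'v, 's \<times> 'd, 'msg, 'e, 'y) failure_model_scheme \<Rightarrow> bool" where
  "acts_independently S D F \<longleftrightarrow>
     (\<forall>\<alpha>\<in>advs F. \<forall>i. \<exists>Ds1 Ds2.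
        \<forall>k. \<forall>s\<in>S i. \<forall>d\<in>D i. ds \<alpha> i k (s, d) = (Ds1 k s, Ds2 k d))"

definition no_action_memory_perturbation ::
  "('a \<Rightarrow> 's set) \<Rightarrow> ('a \<Rightarrow> 'd set) \<Rightarrow> ('a, 'v, 's \<times> 'd, 'msg, 'e, 'y) failure_model_scheme \<Rightarrow> bool" where
  "no_action_memory_perturbation S D F \<longleftrightarrow>
     (\<forall>\<alpha>\<in>advs F. \<forall>i. \<exists>Ds1 Ds2.
        (\<forall>k. \<forall>s\<in>S i. \<forall>d\<in>D i. ds \<alpha> i k (s, d) = (Ds1 k s, Ds2 k d)) \<and>
        (\<forall>k. \<forall>d\<in>D i. Ds2 k d = d))"

type_synonym ('a, 'v, 'l) protocol = "'a \<Rightarrow> 'l \<Rightarrow> 'v act"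

type_synonym ('a, 'l, 'msg, 'e) gstate = "('e \<times> ('a, 'l, 'msg) adversary) \<times> ('a \<Rightarrow> 'l)"

definition gstep ::
  "('a, 'v, 'l) protocol \<Rightarrow> ('a, 'v, 'l, 'msg, 'z) info_exchange_scheme
   \<Rightarrow> ('a, 'v, 'l, 'msg, 'e, 'y) failure_model_scheme \<Rightarrow> nat
   \<Rightarrow> ('a, 'l, 'msg, 'e) gstate \<Rightarrow> ('a, 'l, 'msg, 'e) gstate" where
  "gstep P E F k g =
     (let se = fst (fst g); \<alpha> = snd (fst g); ls = snd g;
          acts = (\<lambda>i. P i (ls i));
          recv = (\<lambda>i j. dr \<alpha> k i j (dt \<alpha> k i j (mu E i (ls i) (acts i) j)));
          sstar = (\<lambda>j. delta E j (ls j) (acts j) (\<lambda>i. recv i j))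
      in ((env_delta F se acts, \<alpha>), (\<lambda>j. ds \<alpha> j k (sstar j))))"

primrec run ::
  "('a, 'v, 'l) protocol \<Rightarrow> ('a, 'v, 'l, 'msg, 'z) info_exchange_scheme
   \<Rightarrow> ('a, 'v, 'l, 'msg, 'e, 'y) failure_model_scheme
   \<Rightarrow> ('a, 'l, 'msg, 'e) gstate \<Rightarrow> nat \<Rightarrow> ('a, 'l, 'msg, 'e) gstate" where
  "run P E F g0 0 = g0"
| "run P E F g0 (Suc k) = gstep P E F k (run P E F g0 k)"

text \<open>Initial global states; a run is identified by its initial global state
  (runs of different systems correspond iff they have the same initial state).\<close>
definition inits ::
  "('a, 'v, 'l, 'msg, 'z) info_exchange_scheme \<Rightarrow> ('a, 'v, 'l, 'msg, 'e, 'y) failure_model_scheme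
   \<Rightarrow> ('a, 'l, 'msg, 'e) gstate set" where
  "inits E F = {g. fst (fst g) \<in> env_init F \<and> snd (fst g) \<in> advs F \<and> (\<forall>i. snd g i \<in> istates E i)}"

definition loc where
  "loc P E F g0 i m = snd (run P E F g0 m) i"

definition action where
  "action P E F g0 i m = P i (loc P E F g0 i m)"

definition adv_of :: "('a, 'l, 'msg, 'e) gstate \<Rightarrow> ('a, 'l, 'msg) adversary" where
  "adv_of g0 = snd (fst g0)"

text \<open>Messages sent from i to j in round k (from time k to k+1).\<close>
definition sent where
  "sent P E F g0 k i j = mu E i (loc P E F g0 i k) (action P E F g0 i k) j"

definition has_fault where
  "has_fault P E F g0 i k \<longleftrightarrow>
     (let \<alpha> = adv_of g0;
          tr = (\<lambda>a b. dt \<alpha> k a b (sent P E F g0 k a b));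
          sstar = delta E i (loc P E F g0 i k) (action P E F g0 i k) (\<lambda>j. dr \<alpha> k j i (tr j i))
      in (\<exists>j. tr i j \<noteq> sent P E F g0 k i j) \<or>
         (\<exists>j. dr \<alpha> k j i (tr j i) \<noteq> tr j i) \<or>
         ds \<alpha> i k sstar \<noteq> sstar)"

text \<open>N(r,m): agents with no fault in any round of r (independent of m).\<close>
definition nonfaulty where
  "nonfaulty P E F g0 = {i. \<forall>k. \<not> has_fault P E F g0 i k}"

type_synonym ('a, 'l, 'msg, 'e) formula = "('a, 'l, 'msg, 'e) gstate \<Rightarrow> nat \<Rightarrow> bool"

definition Kn where
  "Kn P E F i \<phi> g m \<longleftrightarrow>
     (\<forall>g'\<in>inits E F. \<forall>m'. loc P E F g' i m' = loc P E F g i m \<longrightarrow> \<phi> g' m')"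

definition BN where
  "BN P E F i \<phi> = Kn P E F i (\<lambda>g m. i \<in> nonfaulty P E F g \<longrightarrow> \<phi> g m)"

definition EB where
  "EB P E F \<phi> g m \<longleftrightarrow> (\<forall>i\<in>nonfaulty P E F g. BN P E F i \<phi> g m)"

definition CB where
  "CB P E F \<phi> g m \<longleftrightarrow> (\<forall>k\<ge>1. (EB P E F ^^ k) \<phi> g m)"

definition exists_val where
  "exists_val E v g m \<longleftrightarrow> (\<exists>j. init E j (snd g j) = v)"

definition Phi_CB where
  "Phi_CB E F P i v = BN P E F i (CB P E F (exists_val E v))"

definition decided_before where
  "decided_before P E F g i m \<longleftrightarrow> (\<exists>k<m. \<exists>v. action P E F g i k = Decide v)"

definition prescribed ::
  "('a, 'v::linorder, 'l) protocol \<Rightarrow> ('a, 'v, 'l, 'msg, 'z) info_exchange_scheme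
   \<Rightarrow> ('a, 'v, 'l, 'msg, 'e, 'y) failure_model_scheme
   \<Rightarrow> ('a \<Rightarrow> 'v \<Rightarrow> ('a, 'l, 'msg, 'e) formula)
   \<Rightarrow> ('a, 'l, 'msg, 'e) gstate \<Rightarrow> 'a \<Rightarrow> nat \<Rightarrow> 'v act" where
  "prescribed P E F \<Phi> g i m =
     (if decided_before P E F g i m then Noop
      else if \<exists>v. \<Phi> i v g m then Decide (LEAST v. \<Phi> i v g m) else Noop)"

text \<open>Phi is given as a function of the protocol, since it is evaluated in I_{P,E,F}.\<close>
definition implements where
  "implements E F \<Phi> P \<longleftrightarrow>
     (\<forall>g\<in>inits E F. \<forall>m i. action P E F g i m = prescribed P E F (\<Phi> P) g i m)"

definition SBA_protocol where
  "SBA_protocol E F P \<longleftrightarrow>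
     (\<forall>g\<in>inits E F.
        (\<forall>i m m' v v'. action P E F g i m = Decide v \<longrightarrow> action P E F g i m' = Decide v' \<longrightarrow> m = m') \<and>
        (\<forall>i m v. i \<in> nonfaulty P E F g \<longrightarrow> action P E F g i m = Decide v \<longrightarrow>
            (\<forall>j\<in>nonfaulty P E F g. action P E F g j m = Decide v) \<and>
            (\<exists>j. init E j (snd g j) = v)))"

definition proto_le where
  "proto_le E F P1 P2 \<longleftrightarrow>
     (\<forall>g\<in>inits E F. \<forall>i m v. action P1 E F g i m = Decide v \<longrightarrow>
        \<not> (\<exists>m'<m. \<exists>v'. action P2 E F g i m' = Decide v'))"

definition optimum_SBA where
  "optimum_SBA E F P \<longleftrightarrow> SBA_protocol E F P \<and> (\<forall>P'. SBA_protocol E F P' \<longrightarrow> proto_le E F P P')"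

end

theory Submission
  imports Defs
begin

locale ctx =
  fixes E :: "('a::finite, 'v::linorder, 's \<times> 'd, 'msg) info_exchange"
    and F :: "('a, 'v, 's \<times> 'd, 'msg, 'e) failure_model"
    and S :: "'a \<Rightarrow> 's set" and D :: "'a \<Rightarrow> 'd set"
    and mu' :: "'a \<Rightarrow> 's \<Rightarrow> 'a \<Rightarrow> 'msg"
    and delta1 :: "'a \<Rightarrow> 's \<Rightarrow> ('a \<Rightarrow> 'msg) \<Rightarrow> 's"
    and delta2 :: "'a \<Rightarrow> 'd \<Rightarrow> 'v act \<Rightarrow> 'd"
    and D1 D2 :: "'a \<Rightarrow> 'd set"
  assumes ie: "info_exchange E"
    and fm: "failure_model E F"
    and nai: "no_action_info E S D mu' delta1 delta2"
    and rdi: "records_decision_info E S D delta2 D1 D2"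
    and nap: "no_action_memory_perturbation S D F"
begin

lemma adv_run: "snd (fst (run P E F g m)) = snd (fst g)"
  by (induction m) (simp_all add: gstep_def Let_def)

lemma loc_Suc: "loc P E F g j (Suc k) = ds (adv_of g) j k (delta E j (loc P E F g j k) (action P E F g j k)
   (\<lambda>i. dr (adv_of g) k i j (dt (adv_of g) k i j (sent P E F g k i j))))"
  by (simp add: loc_def gstep_def Let_def adv_run adv_of_def action_def sent_def)

lemma loc_0: "loc P E F g j 0 = snd g j"
  by (simp add: loc_def)

lemma adv_in: "g \<in> inits E F \<Longrightarrow> adv_of g \<in> advs F"
  by (simp add: inits_def adv_of_def)

lemma lst: "lstates E i = S i \<times> D i"
  using nai by (simp add: no_action_info_def)

lemma mu_eq: "s \<in> S i \<Longrightarrow> d \<in> D i \<Longrightarrow> mu E i (s, d) a = mu' i s"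
  using nai by (simp add: no_action_info_def)

lemma delta_eq: "s \<in> S i \<Longrightarrow> d \<in> D i \<Longrightarrow> (\<forall>j. m j \<in> allmsgs E) \<Longrightarrow>
   delta E i (s, d) a m = (delta1 i s m, delta2 i d a)"
  using nai by (simp add: no_action_info_def)

lemma delta1_in: "s \<in> S i \<Longrightarrow> (\<forall>j. m j \<in> allmsgs E) \<Longrightarrow> delta1 i s m \<in> S i"
  using nai by (simp add: no_action_info_def)

lemma delta2_in: "d \<in> D i \<Longrightarrow> delta2 i d a \<in> D i"
  using nai by (simp add: no_action_info_def)

lemma ds_fst: "\<alpha> \<in> advs F \<Longrightarrow> s \<in> S i \<Longrightarrow> d \<in> D i \<Longrightarrow> d' \<in> D i \<Longrightarrow>
   fst (ds \<alpha> i k (s, d)) = fst (ds \<alpha> i k (s, d'))"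
proof -
  assume a: "\<alpha> \<in> advs F" "s \<in> S i" "d \<in> D i" "d' \<in> D i"
  then obtain Ds1 Ds2 where "\<forall>k. \<forall>s\<in>S i. \<forall>d\<in>D i. ds \<alpha> i k (s, d) = (Ds1 k s, Ds2 k d)"
    using nap unfolding no_action_memory_perturbation_def by blast
  then show ?thesis using a by simp
qed

lemma ds_snd: "\<alpha> \<in> advs F \<Longrightarrow> s \<in> S i \<Longrightarrow> d \<in> D i \<Longrightarrow> snd (ds \<alpha> i k (s, d)) = d"
proof -
  assume a: "\<alpha> \<in> advs F" "s \<in> S i" "d \<in> D i"
  then obtain Ds1 Ds2 where "\<forall>k. \<forall>s\<in>S i. \<forall>d\<in>D i. ds \<alpha> i k (s, d) = (Ds1 k s, Ds2 k d)"
    "\<forall>k. \<forall>d\<in>D i. Ds2 k d = d"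
    using nap unfolding no_action_memory_perturbation_def by blast
  then show ?thesis using a by simp
qed

lemma fm_adv: "\<alpha> \<in> advs F \<Longrightarrow>
        (\<forall>k i j m. m \<in> allmsgs E \<longrightarrow> dt \<alpha> k i j m \<in> allmsgs E) \<and>
        (\<forall>k i j m. m \<in> allmsgs E \<longrightarrow> dr \<alpha> k i j m \<in> allmsgs E) \<and>
        (\<forall>i k s. s \<in> lstates E i \<longrightarrow>
            ds \<alpha> i k s \<in> lstates E i \<and> time E i (ds \<alpha> i k s) = time E i s)"
  using fm unfolding failure_model_def by (elim conjE) (drule bspec, assumption)

lemma mu_in: "l \<in> lstates E i \<Longrightarrow> mu E i l a j \<in> allmsgs E"
proof -
  assume "l \<in> lstates E i"
  moreover have "\<forall>i s a j. s \<in> lstates E i \<longrightarrow> mu E i s a j \<in> msgs E i"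
    using ie unfolding info_exchange_def by (elim conjE)
  ultimately have "mu E i l a j \<in> msgs E i" by blast
  then show ?thesis unfolding allmsgs_def by (rule UN_I[rotated]) simp
qed

lemma dt_in: "\<alpha> \<in> advs F \<Longrightarrow> m \<in> allmsgs E \<Longrightarrow> dt \<alpha> k i j m \<in> allmsgs E"
  using fm_adv by simp

lemma dr_in: "\<alpha> \<in> advs F \<Longrightarrow> m \<in> allmsgs E \<Longrightarrow> dr \<alpha> k i j m \<in> allmsgs E"
  using fm_adv by simp

lemma ds_in: "\<alpha> \<in> advs F \<Longrightarrow> l \<in> lstates E i \<Longrightarrow> ds \<alpha> i k l \<in> lstates E i \<and> time E i (ds \<alpha> i k l) = time E i l"
  using fm_adv by blast

lemma delta_in: "l \<in> lstates E i \<Longrightarrow> (\<forall>j. m j \<in> allmsgs E) \<Longrightarrow>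
   delta E i l a m \<in> lstates E i \<and> time E i (delta E i l a m) = Suc (time E i l)"
proof -
  assume "l \<in> lstates E i" "\<forall>j. m j \<in> allmsgs E"
  moreover have "\<forall>i s a m. s \<in> lstates E i \<longrightarrow> (\<forall>j. m j \<in> allmsgs E) \<longrightarrow>
        delta E i s a m \<in> lstates E i \<and>
        init E i (delta E i s a m) = init E i s \<and>
        time E i (delta E i s a m) = Suc (time E i s)"
    using ie unfolding info_exchange_def by (elim conjE)
  ultimately show ?thesis by blast
qed

lemma init_in: "s \<in> istates E i \<Longrightarrow> s \<in> lstates E i \<and> time E i s = 0"
  using ie unfolding info_exchange_def by blast

lemma loc_in: "g \<in> inits E F \<Longrightarrow> loc P E F g i m \<in> lstates E i \<and> time E i (loc P E F g i m) = m"
proof (induction m arbitrary: i)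
  case 0
  then show ?case using init_in unfolding inits_def loc_0 by blast
next
  case (Suc k)
  have r: "\<forall>j. dr (adv_of g) k j i (dt (adv_of g) k j i (sent P E F g k j i)) \<in> allmsgs E"
    using Suc adv_in mu_in dt_in dr_in unfolding sent_def by blast
  have "delta E i (loc P E F g i k) (action P E F g i k)
     (\<lambda>j. dr (adv_of g) k j i (dt (adv_of g) k j i (sent P E F g k j i))) \<in> lstates E i \<and>
    time E i (delta E i (loc P E F g i k) (action P E F g i k)
     (\<lambda>j. dr (adv_of g) k j i (dt (adv_of g) k j i (sent P E F g k j i)))) = Suc k"
    using delta_in[OF _ r] Suc by simp
  then show ?case unfolding loc_Suc using ds_in[OF adv_in[OF Suc.prems]] by simp
qed


lemma loc_SD: "g \<in> inits E F \<Longrightarrow> fst (loc P E F g i m) \<in> S i \<and> snd (loc P E F g i m) \<in> D i"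
  using loc_in[of g P i m] lst by (simp add: mem_Times_iff)

lemma loc_time: "g \<in> inits E F \<Longrightarrow> time E i (loc P E F g i m) = m"
  using loc_in by blast

lemma recv_in: "g \<in> inits E F \<Longrightarrow> \<forall>j. dr (adv_of g) k j i (dt (adv_of g) k j i (sent P E F g k j i)) \<in> allmsgs E"
  using adv_in mu_in dt_in dr_in loc_in unfolding sent_def by blast

lemma sent_eq: "g \<in> inits E F \<Longrightarrow> sent P E F g k i j = mu' i (fst (loc P E F g i k)) j"
  using loc_SD[of g P i k] mu_eq unfolding sent_def
  by (metis prod.collapse)

definition recvd where
  "recvd P g k j = (\<lambda>i. dr (adv_of g) k i j (dt (adv_of g) k i j (mu' i (fst (loc P E F g i k)) j)))"

lemma recvd_in: "g \<in> inits E F \<Longrightarrow> \<forall>i. recvd P g k j i \<in> allmsgs E"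
  using recv_in[where P=P and k=k and i=j] sent_eq[where P=P] unfolding recvd_def by simp

lemma loc_Suc_split: assumes g: "g \<in> inits E F"
  shows "loc P E F g j (Suc k) =
    (fst (ds (adv_of g) j k (delta1 j (fst (loc P E F g j k)) (recvd P g k j),
                             delta2 j (snd (loc P E F g j k)) (action P E F g j k))),
     delta2 j (snd (loc P E F g j k)) (action P E F g j k))"
proof -
  have sd: "fst (loc P E F g j k) \<in> S j" "snd (loc P E F g j k) \<in> D j" using loc_SD[OF g] by auto
  have d: "delta E j (loc P E F g j k) (action P E F g j k)
   (\<lambda>i. dr (adv_of g) k i j (dt (adv_of g) k i j (sent P E F g k i j)))
    = (delta1 j (fst (loc P E F g j k)) (recvd P g k j), delta2 j (snd (loc P E F g j k)) (action P E F g j k))"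
    using delta_eq[OF sd recvd_in[OF g, of P k j], of "action P E F g j k"]
    unfolding recvd_def sent_eq[OF g] by simp
  have in1: "delta1 j (fst (loc P E F g j k)) (recvd P g k j) \<in> S j"
    using delta1_in[OF sd(1) recvd_in[OF g]] .
  have in2: "delta2 j (snd (loc P E F g j k)) (action P E F g j k) \<in> D j"
    using delta2_in[OF sd(2)] .
  show ?thesis unfolding loc_Suc d
    using ds_snd[OF adv_in[OF g] in1 in2, of k] by (metis prod.collapse)
qed

lemma fst_indep: assumes g: "g \<in> inits E F"
  shows "fst (loc P E F g i m) = fst (loc P' E F g i m)"
proof (induction m arbitrary: i)
  case 0
  then show ?case by (simp add: loc_0)
next
  case (Suc k)
  have R: "recvd P g k i = recvd P' g k i" unfolding recvd_def using Suc by simp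
  have sd: "fst (loc P E F g i k) \<in> S i" "snd (loc P E F g i k) \<in> D i"
     "snd (loc P' E F g i k) \<in> D i" using loc_SD[OF g] by auto
  have in1: "delta1 i (fst (loc P E F g i k)) (recvd P g k i) \<in> S i"
    using delta1_in[OF sd(1) recvd_in[OF g]] .
  show ?case unfolding loc_Suc_split[OF g] using ds_fst[OF adv_in[OF g] in1 delta2_in[OF sd(2)] delta2_in[OF sd(3)]]
    by (simp add: R Suc)
qed

lemma snd_Suc: "g \<in> inits E F \<Longrightarrow> snd (loc P E F g j (Suc k)) = delta2 j (snd (loc P E F g j k)) (action P E F g j k)"
  using loc_Suc_split by simp


lemma rdi_i: "D i = D1 i \<union> D2 i \<and> D1 i \<inter> D2 i = {} \<and>
        istates E i \<subseteq> S i \<times> D1 i \<and>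
        (\<forall>d\<in>D1 i. delta2 i d Noop \<in> D1 i \<and> (\<forall>v. delta2 i d (Decide v) \<in> D2 i)) \<and>
        (\<forall>d\<in>D2 i. \<forall>a. delta2 i d a \<in> D2 i)"
  using rdi unfolding records_decision_info_def by blast

lemma dec_Suc: "decided_before P E F g i (Suc k) \<longleftrightarrow> decided_before P E F g i k \<or> (\<exists>v. action P E F g i k = Decide v)"
  unfolding decided_before_def using less_Suc_eq by auto

lemma dec_0: "\<not> decided_before P E F g i 0"
  unfolding decided_before_def by simp

lemma dec_snd: assumes g: "g \<in> inits E F"
  shows "(\<not> decided_before P E F g i m \<longrightarrow> snd (loc P E F g i m) = ((\<lambda>d. delta2 i d Noop)^^m) (snd (snd g i)) \<and> snd (loc P E F g i m) \<in> D1 i)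
    \<and> (decided_before P E F g i m \<longrightarrow> snd (loc P E F g i m) \<in> D2 i)"
proof (induction m)
  case 0
  have "snd g i \<in> S i \<times> D1 i" using g rdi_i unfolding inits_def by blast
  then show ?case by (auto simp: loc_0 dec_0)
next
  case (Suc k)
  show ?case
  proof (cases "decided_before P E F g i k")
    case True
    then show ?thesis using Suc rdi_i snd_Suc[OF g] dec_Suc by metis
  next
    case False
    show ?thesis
    proof (cases "action P E F g i k")
      case Noop
      then show ?thesis using Suc False rdi_i snd_Suc[OF g] dec_Suc by auto
    next
      case (Decide v)
      then show ?thesis using Suc False rdi_i snd_Suc[OF g] dec_Suc by auto
    qed
  qed
qed

lemma dec_iff: "g \<in> inits E F \<Longrightarrow> decided_before P E F g i m \<longleftrightarrow> snd (loc P E F g i m) \<notin> D1 i"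
  using dec_snd[of g P i m] rdi_i[of i] by blast

lemma loc_same: "g \<in> inits E F \<Longrightarrow> \<not> decided_before P E F g i m \<Longrightarrow> \<not> decided_before P' E F g i m \<Longrightarrow>
   loc P E F g i m = loc P' E F g i m"
  using dec_snd[of g P i m] dec_snd[of g P' i m] fst_indep[of g P i m P'] by (simp add: prod_eq_iff)

lemma loc_transfer: "g \<in> inits E F \<Longrightarrow> g' \<in> inits E F \<Longrightarrow> loc P E F g' i m' = loc P E F g i m \<Longrightarrow>
   m' = m \<and> (decided_before P E F g' i m \<longleftrightarrow> decided_before P E F g i m)"
  using loc_time[where g=g and P=P and i=i and m=m] loc_time[where g=g' and P=P and i=i and m=m'] dec_iff[where g=g and P=P and i=i and m=m] dec_iff[where g=g' and P=P and i=i and m=m'] by metis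

lemma has_fault_alt: assumes g: "g \<in> inits E F"
  shows "has_fault P E F g i k \<longleftrightarrow>
     (\<exists>j. dt (adv_of g) k i j (mu' i (fst (loc P E F g i k)) j) \<noteq> mu' i (fst (loc P E F g i k)) j) \<or>
     (\<exists>j. recvd P g k i j \<noteq> dt (adv_of g) k j i (mu' j (fst (loc P E F g j k)) i)) \<or>
     fst (ds (adv_of g) i k (delta1 i (fst (loc P E F g i k)) (recvd P g k i),
                             delta2 i (snd (loc P E F g i k)) (action P E F g i k)))
       \<noteq> delta1 i (fst (loc P E F g i k)) (recvd P g k i)"
proof -
  have sd: "fst (loc P E F g i k) \<in> S i" "snd (loc P E F g i k) \<in> D i" using loc_SD[OF g] by auto
  have d: "delta E i (loc P E F g i k) (action P E F g i k)
   (\<lambda>j. dr (adv_of g) k j i (dt (adv_of g) k j i (sent P E F g k j i)))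
    = (delta1 i (fst (loc P E F g i k)) (recvd P g k i), delta2 i (snd (loc P E F g i k)) (action P E F g i k))"
    using delta_eq[OF sd recvd_in[OF g, of P k i], of "action P E F g i k"]
    unfolding recvd_def sent_eq[OF g] by simp
  have in1: "delta1 i (fst (loc P E F g i k)) (recvd P g k i) \<in> S i"
    using delta1_in[OF sd(1) recvd_in[OF g]] .
  have in2: "delta2 i (snd (loc P E F g i k)) (action P E F g i k) \<in> D i"
    using delta2_in[OF sd(2)] .
  have sn: "snd (ds (adv_of g) i k (delta1 i (fst (loc P E F g i k)) (recvd P g k i),
                             delta2 i (snd (loc P E F g i k)) (action P E F g i k))) = 
           delta2 i (snd (loc P E F g i k)) (action P E F g i k)"
    using ds_snd[OF adv_in[OF g] in1 in2] .
  show ?thesis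
    unfolding has_fault_def Let_def d
    unfolding sent_eq[OF g] recvd_def
    using sn[unfolded recvd_def] by (auto simp: prod_eq_iff)
qed

lemma has_fault_indep: assumes g: "g \<in> inits E F"
  shows "has_fault P E F g i k \<longleftrightarrow> has_fault P' E F g i k"
proof -
  have R: "recvd P g k i = recvd P' g k i" unfolding recvd_def using fst_indep[OF g, of P _ _ P'] by simp
  have sd: "fst (loc P E F g i k) \<in> S i" "snd (loc P E F g i k) \<in> D i"
     "snd (loc P' E F g i k) \<in> D i" using loc_SD[OF g] by auto
  have in1: "delta1 i (fst (loc P E F g i k)) (recvd P g k i) \<in> S i"
    using delta1_in[OF sd(1) recvd_in[OF g]] .
  show ?thesis unfolding has_fault_alt[OF g]
    using ds_fst[OF adv_in[OF g] in1 delta2_in[OF sd(2)] delta2_in[OF sd(3)], of k "action P E F g i k" "action P' E F g i k"]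
    by (simp add: R fst_indep[OF g, of P _ _ P'])
qed

lemma nonfaulty_indep: "g \<in> inits E F \<Longrightarrow> nonfaulty P E F g = nonfaulty P' E F g"
  unfolding nonfaulty_def using has_fault_indep by blast


lemma EB_Suc: "(EB Q E F ^^ Suc k) \<phi> = EB Q E F ((EB Q E F ^^ k) \<phi>)"
  by simp

lemma CB_BN: assumes g: "g \<in> inits E F" and cb: "CB Q E F \<phi> g m" and j: "j \<in> nonfaulty Q E F g"
  shows "BN Q E F j (CB Q E F \<phi>) g m"
  unfolding BN_def Kn_def
proof (intro ballI allI impI)
  fix g' m'
  assume g': "g' \<in> inits E F" and l: "loc Q E F g' j m' = loc Q E F g j m" and j': "j \<in> nonfaulty Q E F g'"
  show "CB Q E F \<phi> g' m'" unfolding CB_def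
  proof (intro allI impI)
    fix k :: nat assume "k \<ge> 1"
    have "EB Q E F ((EB Q E F ^^ k) \<phi>) g m" using cb[unfolded CB_def, rule_format, of "Suc k"] by simp
    then have "BN Q E F j ((EB Q E F ^^ k) \<phi>) g m" using j unfolding EB_def by blast
    then show "(EB Q E F ^^ k) \<phi> g' m'" using g' l j' unfolding BN_def Kn_def by blast
  qed
qed

lemma Phi_CB_imp: "g \<in> inits E F \<Longrightarrow> i \<in> nonfaulty Q E F g \<Longrightarrow> Phi_CB E F Q i v g m \<Longrightarrow> CB Q E F (exists_val E v) g m"
  unfolding Phi_CB_def BN_def Kn_def by blast

lemma Phi_equiv: "g \<in> inits E F \<Longrightarrow> i \<in> nonfaulty Q E F g \<Longrightarrow> j \<in> nonfaulty Q E F g \<Longrightarrow>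
   Phi_CB E F Q i v g m \<Longrightarrow> Phi_CB E F Q j v g m"
  using Phi_CB_imp CB_BN unfolding Phi_CB_def by blast

lemma Phi_valid: assumes g: "g \<in> inits E F" and i: "i \<in> nonfaulty Q E F g" and ph: "Phi_CB E F Q i v g m"
  shows "\<exists>j. init E j (snd g j) = v"
proof -
  have "CB Q E F (exists_val E v) g m" using Phi_CB_imp[OF g i ph] .
  then have "(EB Q E F ^^ 1) (exists_val E v) g m" unfolding CB_def by blast
  then have "BN Q E F i (exists_val E v) g m" using i unfolding EB_def by simp
  then show ?thesis using g i unfolding BN_def Kn_def exists_val_def by blast
qed

lemma BN_mono: "BN Q E F j A g m \<Longrightarrow> (\<And>g' m'. g' \<in> inits E F \<Longrightarrow> j \<in> nonfaulty Q E F g' \<Longrightarrow> A g' m' \<Longrightarrow> B g' m')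
   \<Longrightarrow> BN Q E F j B g m"
  unfolding BN_def Kn_def by blast

end

locale ctxP = ctx E F S D mu' delta1 delta2 D1 D2
  for E :: "('a::finite, 'v::linorder, 's \<times> 'd, 'msg) info_exchange"
    and F :: "('a, 'v, 's \<times> 'd, 'msg, 'e) failure_model"
    and S :: "'a \<Rightarrow> 's set" and D :: "'a \<Rightarrow> 'd set"
    and mu' :: "'a \<Rightarrow> 's \<Rightarrow> 'a \<Rightarrow> 'msg"
    and delta1 :: "'a \<Rightarrow> 's \<Rightarrow> ('a \<Rightarrow> 'msg) \<Rightarrow> 's"
    and delta2 :: "'a \<Rightarrow> 'd \<Rightarrow> 'v act \<Rightarrow> 'd"
    and D1 D2 :: "'a \<Rightarrow> 'd set" +
  fixes P :: "('a, 'v, 's \<times> 'd) protocol"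
  assumes impl: "implements E F (\<lambda>P'. Phi_CB E F P') P"
begin

lemma act_presc: "g \<in> inits E F \<Longrightarrow> action P E F g i m = prescribed P E F (Phi_CB E F P) g i m"
  using impl unfolding implements_def by blast

lemma P_dec: "g \<in> inits E F \<Longrightarrow> action P E F g i m = Decide v \<Longrightarrow>
   \<not> decided_before P E F g i m \<and> (\<exists>w. Phi_CB E F P i w g m) \<and> v = (LEAST w. Phi_CB E F P i w g m)"
  using act_presc[of g i m] unfolding prescribed_def by (auto split: if_splits)

lemma P_go: "g \<in> inits E F \<Longrightarrow> \<not> decided_before P E F g i m \<Longrightarrow> Phi_CB E F P i w g m \<Longrightarrow>
   \<exists>v. action P E F g i m = Decide v"
  using act_presc[of g i m] unfolding prescribed_def by auto

lemma P_once: "g \<in> inits E F \<Longrightarrow> action P E F g i m = Decide v \<Longrightarrow> action P E F g i m' = Decide v' \<Longrightarrow> m = m'"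
proof (rule ccontr)
  assume g: "g \<in> inits E F" and a: "action P E F g i m = Decide v" "action P E F g i m' = Decide v'" "m \<noteq> m'"
  show False
  proof (cases "m < m'")
    case True
    then have "decided_before P E F g i m'" using a unfolding decided_before_def by blast
    then show False using P_dec[OF g a(2)] by blast
  next
    case False
    then have "decided_before P E F g i m" using a unfolding decided_before_def
      by (metis linorder_neqE_nat)
    then show False using P_dec[OF g a(1)] by blast
  qed
qed

lemma P_agree: "g \<in> inits E F \<Longrightarrow> i \<in> nonfaulty P E F g \<Longrightarrow> j \<in> nonfaulty P E F g \<Longrightarrow>
   action P E F g i m = Decide v \<Longrightarrow> action P E F g j m = Decide v"
proof (induction m arbitrary: g i j v rule: less_induct)
  case (less m)
  note g = less.prems(1)
  have di: "\<not> decided_before P E F g i m" "\<exists>w. Phi_CB E F P i w g m" "v = (LEAST w. Phi_CB E F P i w g m)"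
    using P_dec[OF g less.prems(4)] by auto
  have dj: "\<not> decided_before P E F g j m"
  proof
    assume "decided_before P E F g j m"
    then obtain k w where "k < m" "action P E F g j k = Decide w" unfolding decided_before_def by blast
    then have "action P E F g i k = Decide w" using less.IH[OF _ g less.prems(3) less.prems(2)] by blast
    then show False using di(1) \<open>k < m\<close> unfolding decided_before_def by blast
  qed
  have eq: "(\<lambda>w. Phi_CB E F P j w g m) = (\<lambda>w. Phi_CB E F P i w g m)"
    using Phi_equiv[OF g less.prems(2) less.prems(3)] Phi_equiv[OF g less.prems(3) less.prems(2)] by blast
  show ?case using act_presc[of g j m] dj di g eq unfolding prescribed_def by simp
qed

lemma P_valid: assumes g: "g \<in> inits E F" and i: "i \<in> nonfaulty P E F g" and a: "action P E F g i m = Decide v"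
  shows "\<exists>j. init E j (snd g j) = v"
proof -
  have d: "\<exists>w. Phi_CB E F P i w g m" "v = (LEAST w. Phi_CB E F P i w g m)" using P_dec[OF g a] by auto
  have sub: "{w. Phi_CB E F P i w g m} \<subseteq> range (\<lambda>j. init E j (snd g j))"
    using Phi_valid[OF g i] by blast
  have fin: "finite {w. Phi_CB E F P i w g m}" using finite_subset[OF sub] by simp
  have "v = Min {w. Phi_CB E F P i w g m}" using d Least_Min[OF fin] by simp
  moreover have "Min {w. Phi_CB E F P i w g m} \<in> {w. Phi_CB E F P i w g m}"
    using fin d(1) by (intro Min_in) auto
  ultimately have "Phi_CB E F P i v g m" by simp
  then show ?thesis using Phi_valid[OF g i] by blast
qed

lemma P_SBA: "SBA_protocol E F P"
  unfolding SBA_protocol_def using P_once P_agree P_valid by blast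


lemma SBA_facts: assumes sba: "SBA_protocol E F Q" and g: "g \<in> inits E F"
  shows "action Q E F g i m = Decide v \<Longrightarrow> \<not> decided_before Q E F g i m"
    and "i \<in> nonfaulty P E F g \<Longrightarrow> j \<in> nonfaulty P E F g \<Longrightarrow> action Q E F g i m = Decide v \<Longrightarrow> action Q E F g j m = Decide v"
    and "i \<in> nonfaulty P E F g \<Longrightarrow> action Q E F g i m = Decide v \<Longrightarrow> \<exists>j. init E j (snd g j) = v"
proof -
  have N: "nonfaulty Q E F g = nonfaulty P E F g" using nonfaulty_indep[OF g] .
  have s: "(\<forall>i m m' v v'. action Q E F g i m = Decide v \<longrightarrow> action Q E F g i m' = Decide v' \<longrightarrow> m = m') \<and>
        (\<forall>i m v. i \<in> nonfaulty Q E F g \<longrightarrow> action Q E F g i m = Decide v \<longrightarrow>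
            (\<forall>j\<in>nonfaulty Q E F g. action Q E F g j m = Decide v) \<and>
            (\<exists>j. init E j (snd g j) = v))"
    using sba g unfolding SBA_protocol_def by blast
  show "action Q E F g i m = Decide v \<Longrightarrow> \<not> decided_before Q E F g i m"
    using s unfolding decided_before_def by (metis less_irrefl)
  show "i \<in> nonfaulty P E F g \<Longrightarrow> j \<in> nonfaulty P E F g \<Longrightarrow> action Q E F g i m = Decide v \<Longrightarrow> action Q E F g j m = Decide v"
    using s N by blast
  show "i \<in> nonfaulty P E F g \<Longrightarrow> action Q E F g i m = Decide v \<Longrightarrow> \<exists>j. init E j (snd g j) = v"
    using s N by blast
qed

lemma optimal_step:
  assumes sba: "SBA_protocol E F Q"
  shows "g \<in> inits E F \<Longrightarrow> action Q E F g i m = Decide v \<Longrightarrow> \<exists>k\<le>m. \<exists>w. action P E F g i k = Decide w"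
proof (induction m arbitrary: g i v rule: less_induct)
  case (less m)
  note g = less.prems(1)
  have IHc: "\<not> decided_before Q E F g' j m" if g': "g' \<in> inits E F" and nd: "\<not> decided_before P E F g' j m" for g' j
  proof
    assume "decided_before Q E F g' j m"
    then obtain k w where k: "k < m" "action Q E F g' j k = Decide w" unfolding decided_before_def by blast
    then obtain k' w' where "k' \<le> k" "action P E F g' j k' = Decide w'" using less.IH[OF k(1) g' k(2)] by blast
    then show False using nd k(1) unfolding decided_before_def by (meson le_less_trans)
  qed
  define \<psi> where "\<psi> = (\<lambda>(g'::('a, 's \<times> 'd, 'msg, 'e) gstate) (m''::nat). m'' = m \<and>
       (\<forall>j\<in>nonfaulty P E F g'. action Q E F g' j m = Decide v \<and> \<not> decided_before P E F g' j m))"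
  have claimA: "\<psi> g' m" if g': "g' \<in> inits E F" and i': "i' \<in> nonfaulty P E F g'"
     and a: "action Q E F g' i' m = Decide v" and nd: "\<not> decided_before P E F g' i' m" for g' i'
    unfolding \<psi>_def
  proof (intro conjI refl ballI)
    fix j assume j: "j \<in> nonfaulty P E F g'"
    show "action Q E F g' j m = Decide v" using SBA_facts(2)[OF sba g' i' j a] .
    show "\<not> decided_before P E F g' j m"
    proof
      assume "decided_before P E F g' j m"
      then obtain k w where k: "k < m" "action P E F g' j k = Decide w" unfolding decided_before_def by blast
      then have "action P E F g' i' k = Decide w" using P_agree[OF g' j i'] by blast
      then show False using nd k(1) unfolding decided_before_def by blast
    qed
  qed
  have claimB: "\<psi> g' m'" if g0: "g0 \<in> inits E F" and ps: "\<psi> g0 m0" and j: "j \<in> nonfaulty P E F g0"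
     and g': "g' \<in> inits E F" and l: "loc P E F g' j m' = loc P E F g0 j m0" and j': "j \<in> nonfaulty P E F g'"
     for g0 m0 j g' m'
  proof -
    have m0: "m0 = m" and a0: "action Q E F g0 j m = Decide v" and nd0: "\<not> decided_before P E F g0 j m"
      using ps j unfolding \<psi>_def by auto
    have tr: "m' = m" "\<not> decided_before P E F g' j m" using loc_transfer[OF g0 g' l] nd0 m0 by auto
    have nq': "\<not> decided_before Q E F g' j m" using IHc[OF g' tr(2)] .
    have nq0: "\<not> decided_before Q E F g0 j m" using SBA_facts(1)[OF sba g0 a0] .
    have "loc Q E F g' j m = loc Q E F g0 j m"
      using loc_same[OF g' tr(2) nq'] loc_same[OF g0 nd0 nq0] l tr(1) m0 by simp
    then have "action Q E F g' j m = Decide v" using a0 unfolding action_def by simp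
    then show ?thesis using claimA[OF g' j' _ tr(2)] tr(1) by simp
  qed
  have EBpsi: "BN P E F j \<psi> g0 m0" if g0: "g0 \<in> inits E F" and ps: "\<psi> g0 m0" and j: "j \<in> nonfaulty P E F g0" for g0 m0 j
    unfolding BN_def Kn_def using claimB[OF g0 ps j] by blast
  have ex: "exists_val E v g' m'" if g': "g' \<in> inits E F" and j: "j \<in> nonfaulty P E F g'" and ps: "\<psi> g' m'" for g' m' j
  proof -
    have "action Q E F g' j m = Decide v" using ps j unfolding \<psi>_def by auto
    then show ?thesis using SBA_facts(3)[OF sba g' j] unfolding exists_val_def by blast
  qed
  have EBk: "(EB P E F ^^ Suc n) (exists_val E v) g0 m0" if g0: "g0 \<in> inits E F" and ps: "\<psi> g0 m0" for n g0 m0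
    using g0 ps
  proof (induction n arbitrary: g0 m0)
    case 0
    have "EB P E F (exists_val E v) g0 m0" unfolding EB_def
    proof
      fix j assume j: "j \<in> nonfaulty P E F g0"
      show "BN P E F j (exists_val E v) g0 m0"
        using BN_mono[OF EBpsi[OF 0(1) 0(2) j]] ex by blast
    qed
    then show ?case by simp
  next
    case (Suc n)
    have H: "\<forall>j\<in>nonfaulty P E F g0. BN P E F j ((EB P E F ^^ Suc n) (exists_val E v)) g0 m0"
    proof
      fix j assume j: "j \<in> nonfaulty P E F g0"
      show "BN P E F j ((EB P E F ^^ Suc n) (exists_val E v)) g0 m0"
        using BN_mono[OF EBpsi[OF Suc(2) Suc(3) j]] Suc.IH by blast
    qed
    have "EB P E F ((EB P E F ^^ Suc n) (exists_val E v)) g0 m0"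
      by (rule EB_def[THEN iffD2, OF H])
    then show ?case by simp
  qed
  have CBpsi: "CB P E F (exists_val E v) g0 m0" if g0: "g0 \<in> inits E F" and ps: "\<psi> g0 m0" for g0 m0
    unfolding CB_def
  proof (intro allI impI)
    fix k :: nat assume "k \<ge> 1"
    then obtain n where "k = Suc n" using not0_implies_Suc by fastforce
    then show "(EB P E F ^^ k) (exists_val E v) g0 m0" using EBk[OF g0 ps] by simp
  qed
  show ?case
  proof (rule ccontr)
    assume nex: "\<not> (\<exists>k\<le>m. \<exists>w. action P E F g i k = Decide w)"
    then have ndP: "\<not> decided_before P E F g i m" unfolding decided_before_def by auto
    have ndQ: "\<not> decided_before Q E F g i m" using SBA_facts(1)[OF sba g less.prems(2)] .
    have "Phi_CB E F P i v g m" unfolding Phi_CB_def BN_def Kn_def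
    proof (intro ballI allI impI)
      fix g' m' assume g': "g' \<in> inits E F" and l: "loc P E F g' i m' = loc P E F g i m"
        and i': "i \<in> nonfaulty P E F g'"
      have tr: "m' = m" "\<not> decided_before P E F g' i m" using loc_transfer[OF g g' l] ndP by auto
      have nq': "\<not> decided_before Q E F g' i m" using IHc[OF g' tr(2)] .
      have "loc Q E F g' i m = loc Q E F g i m"
        using loc_same[OF g' tr(2) nq'] loc_same[OF g ndP ndQ] l tr(1) by simp
      then have "action Q E F g' i m = Decide v" using less.prems(2) unfolding action_def by simp
      then have "\<psi> g' m" using claimA[OF g' i' _ tr(2)] by simp
      then show "CB P E F (exists_val E v) g' m'" using CBpsi[OF g'] tr(1) by simp
    qed
    then obtain w where "action P E F g i m = Decide w" using P_go[OF g ndP] by blast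
    then show False using nex by blast
  qed
qed

lemma P_optimum: "optimum_SBA E F P"
  unfolding optimum_SBA_def proto_le_def
proof (intro conjI P_SBA allI impI ballI notI)
  fix Q g i m v
  assume sba: "SBA_protocol E F Q" and g: "g \<in> inits E F" and a: "action P E F g i m = Decide v"
    and ex: "\<exists>m'<m. \<exists>v'. action Q E F g i m' = Decide v'"
  then obtain m' v' where m': "m' < m" "action Q E F g i m' = Decide v'" by blast
  then obtain k w where "k \<le> m'" "action P E F g i k = Decide w" using optimal_step[OF sba g] by blast
  then show False using P_once[OF g a] m'(1) by fastforce
qed

end

theorem theorem15:
  fixes E :: "('a::finite, 'v::linorder, 's \<times> 'd, 'msg) info_exchange"
    and F :: "('a, 'v, 's \<times> 'd, 'msg, 'e) failure_model"
    and P :: "('a, 'v, 's \<times> 'd) protocol"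
    and S :: "'a \<Rightarrow> 's set" and D :: "'a \<Rightarrow> 'd set"
    and mu' :: "'a \<Rightarrow> 's \<Rightarrow> 'a \<Rightarrow> 'msg"
    and delta1 :: "'a \<Rightarrow> 's \<Rightarrow> ('a \<Rightarrow> 'msg) \<Rightarrow> 's"
    and delta2 :: "'a \<Rightarrow> 'd \<Rightarrow> 'v act \<Rightarrow> 'd"
    and D1 D2 :: "'a \<Rightarrow> 'd set"
  assumes "info_exchange E"
    and "failure_model E F"
    and "no_action_info E S D mu' delta1 delta2"
    and "records_decision_info E S D delta2 D1 D2"
    and "acts_independently S D F"
    and "no_action_memory_perturbation S D F"
    and "implements E F (\<lambda>P'. Phi_CB E F P') P"
  shows "optimum_SBA E F P"
proof -
  interpret ctxP E F S D mu' delta1 delta2 D1 D2 P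
    using assms by (unfold_locales) auto
  show ?thesis by (rule P_optimum)
qed

end
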